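(* Let $n\neq 0$, $m\neq 2$ be nonnegative integers with $m+n\ge 3$, and let $\Omega\subsetneq\mathbb{R}^{n+m}\setminus\mathbb{R}^n$ be an open set. Then $\kappa_{m,n}(\Omega)=\kappa_{m,n}$ provided that one of the following holds: (a) there exist $x_0\in\mathbb{R}^n$ and $r>0$ such that $\Omega$ contains $B_r(x_0,0)\setminus\{y=0\}$; (b) there exists $R>0$ such that $\Omega$ contains the set $\{(x,y):|y|>R\}$.
   Context: Points of $\mathbb{R}^{n+m}=\mathbb{R}^n\times\mathbb{R}^m$ are written $(x,y)$, $x\in\mathbb{R}^n$, $y\in\mathbb{R}^m$; $\mathbb{R}^n$ denotes $\{y=0\}$; $N=n+m$, $2^*=\frac{2N}{N-2}$; $B_r(x_0,0)$ is the open ball of radius $r$ centered at $(x_0,0)$. For an open set $\Omega\subset\mathbb{R}^{n+m}\setminus\mathbb{R}^n$, $$\kappa_{m,n}(\Omega)=\inf\Big\{\int_\Omega\Big(|\nabla u|^2-\Big(\frac{m-2}{2}\Big)^2\frac{u^2}{|y|^2}\Big)dx\,dy : u\in C_0^\infty(\Omega),\ \int_\Omega|u|^{2^*}dx\,dy=1\Big\},$$ and $\kappa_{m,n}=\kappa_{m,n}(\mathbb{R}^{n+m}\setminus\mathbb{R}^n)$. *)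

theory Defs
  imports "HOL-Analysis.Analysis"
begin

coinductive smooth_fun :: "('a::euclidean_space \<Rightarrow> real) \<Rightarrow> bool" where
  "f differentiable_on UNIV \<Longrightarrow> (\<forall>v. smooth_fun (\<lambda>p. frechet_derivative f (at p) v))
     \<Longrightarrow> smooth_fun f"

definition C0inf :: "'a::euclidean_space set \<Rightarrow> ('a \<Rightarrow> real) set" where
  "C0inf \<Omega> = {u. smooth_fun u \<and> compact (closure {p. u p \<noteq> 0})
                  \<and> closure {p. u p \<noteq> 0} \<subseteq> \<Omega>}"

definition grad_sq :: "('a::euclidean_space \<Rightarrow> real) \<Rightarrow> 'a \<Rightarrow> real" where
  "grad_sq u p = (\<Sum>b\<in>Basis. (frechet_derivative u (at p) b)\<^sup>2)"

text \<open>Points (x,y) of R^(n+m), with n = CARD('n), m = CARD('m).\<close>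
definition crit_exp :: "nat \<Rightarrow> real" where
  "crit_exp N = 2 * real N / (real N - 2)"

definition kappa :: "((real^'n::finite) \<times> (real^'m::finite)) set \<Rightarrow> ereal" where
  "kappa \<Omega> = (let N = CARD('n) + CARD('m); m = real CARD('m) in
     Inf ((\<lambda>u. ereal (\<integral>p. grad_sq u p - ((m - 2) / 2)\<^sup>2 * (u p)\<^sup>2 / (norm (snd p))\<^sup>2 \<partial>lborel))
          ` {u \<in> C0inf \<Omega>. (\<integral>p. \<bar>u p\<bar> powr crit_exp N \<partial>lborel) = 1}))"

definition punctured_space :: "((real^'n::finite) \<times> (real^'m::finite)) set" where
  "punctured_space = {p. snd p \<noteq> 0}"

end

theory Submission
  imports Defs
begin

lemma smooth_funD:
  assumes "smooth_fun f"
  shows "f differentiable_on UNIV" "smooth_fun (\<lambda>p. frechet_derivative f (at p) v)"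
  using assms by (auto elim: smooth_fun.cases)

lemma affine_deriv:
  fixes u :: "'a::euclidean_space \<Rightarrow> real"
  assumes "u differentiable (at (\<mu> *\<^sub>R (p - c)))"
  shows "((\<lambda>p. k * u (\<mu> *\<^sub>R (p - c))) has_derivative
          (\<lambda>h. k * \<mu> * frechet_derivative u (at (\<mu> *\<^sub>R (p - c))) h)) (at p)"
proof -
  let ?D = "frechet_derivative u (at (\<mu> *\<^sub>R (p - c)))"
  have D: "(u has_derivative ?D) (at (\<mu> *\<^sub>R (p - c)))"
    using assms frechet_derivative_works by blast
  have T: "((\<lambda>p. \<mu> *\<^sub>R (p - c)) has_derivative (\<lambda>h. \<mu> *\<^sub>R h)) (at p)"
    by (auto intro!: derivative_eq_intros)
  have "((\<lambda>p. u (\<mu> *\<^sub>R (p - c))) has_derivative (\<lambda>h. ?D (\<mu> *\<^sub>R h))) (at p)"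
    using diff_chain_at[OF T D] by (simp add: o_def)
  then have "((\<lambda>p. k * u (\<mu> *\<^sub>R (p - c))) has_derivative (\<lambda>h. k * ?D (\<mu> *\<^sub>R h))) (at p)"
    by (rule has_derivative_mult_right)
  moreover have "\<And>h. ?D (\<mu> *\<^sub>R h) = \<mu> * ?D h"
    using linear_cmul[OF has_derivative_linear[OF D]] by simp
  ultimately show ?thesis by (simp add: mult.assoc)
qed

lemma affine_frechet:
  fixes u :: "'a::euclidean_space \<Rightarrow> real"
  assumes "u differentiable_on UNIV"
  shows "frechet_derivative (\<lambda>p. k * u (\<mu> *\<^sub>R (p - c))) (at p) h
         = k * \<mu> * frechet_derivative u (at (\<mu> *\<^sub>R (p - c))) h"
proof -
  have "u differentiable (at (\<mu> *\<^sub>R (p - c)))" using assms by (simp add: differentiable_on_def)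
  from frechet_derivative_at[OF affine_deriv[OF this, of k]] show ?thesis by metis
qed

lemma smooth_affine:
  fixes u :: "'a::euclidean_space \<Rightarrow> real"
  assumes "smooth_fun u"
  shows "smooth_fun (\<lambda>p. k * u (\<mu> *\<^sub>R (p - c)))"
proof -
  define X where "X f \<longleftrightarrow> (\<exists>u k. smooth_fun u \<and> f = (\<lambda>p. k * u (\<mu> *\<^sub>R (p - c))))" for f :: "'a \<Rightarrow> real"
  have "X f \<Longrightarrow> smooth_fun f" for f
  proof (rule smooth_fun.coinduct[of X])
    fix f assume "X f"
    then obtain u k where u: "smooth_fun u" and f: "f = (\<lambda>p. k * u (\<mu> *\<^sub>R (p - c)))"
      unfolding X_def by blast
    have du: "u differentiable_on UNIV" using smooth_funD(1)[OF u] .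
    have "f differentiable_on UNIV"
      unfolding f differentiable_on_def
    proof
      fix p :: 'a
      have "u differentiable (at (\<mu> *\<^sub>R (p - c)))"
        using du by (simp add: differentiable_on_def)
      then show "(\<lambda>p. k * u (\<mu> *\<^sub>R (p - c))) differentiable at p within UNIV"
        using affine_deriv differentiable_def by fastforce
    qed
    moreover have "\<forall>v. X (\<lambda>p. frechet_derivative f (at p) v)"
    proof
      fix v
      have "(\<lambda>p. frechet_derivative f (at p) v) = (\<lambda>p. (k*\<mu>) * (\<lambda>q. frechet_derivative u (at q) v) (\<mu> *\<^sub>R (p - c)))"
        unfolding f using affine_frechet[OF du] by simp
      then show "X (\<lambda>p. frechet_derivative f (at p) v)"
        unfolding X_def using smooth_funD(2)[OF u] by blast
    qed
    ultimately show "\<exists>g. f = g \<and> g differentiable_on UNIV \<and> (\<forall>v. X (\<lambda>p. frechet_derivative g (at p) v) \<or> smooth_fun (\<lambda>p. frechet_derivative g (at p) v))" by blast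
  qed
  then show ?thesis using assms X_def by blast
qed

lemma scale_integral:
  fixes g :: "'a::euclidean_space \<Rightarrow> real"
  assumes g[measurable]: "g \<in> borel_measurable borel" and mu: "\<mu> > 0"
  shows "(\<integral>p. g (\<mu> *\<^sub>R (p - c)) \<partial>lborel) = (1/\<mu>)^DIM('a) * (\<integral>p. g p \<partial>lborel)"
proof -
  have eq: "lborel = density (distr lborel borel (\<lambda>x. c + (1/\<mu>) *\<^sub>R x)) (\<lambda>_. \<bar>1/\<mu>\<bar>^DIM('a))"
    by (rule lborel_affine) (use mu in simp)
  have "(\<integral>p. g (\<mu> *\<^sub>R (p - c)) \<partial>lborel)
     = (\<integral>p. g (\<mu> *\<^sub>R (p - c)) \<partial>density (distr lborel borel (\<lambda>x. c + (1/\<mu>) *\<^sub>R x)) (\<lambda>_. \<bar>1/\<mu>\<bar>^DIM('a)))"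
    unfolding eq[symmetric] ..
  also have "\<dots> = (\<integral>p. \<bar>1/\<mu>\<bar>^DIM('a) * g (\<mu> *\<^sub>R (p - c)) \<partial>distr lborel borel (\<lambda>x. c + (1/\<mu>) *\<^sub>R x))"
    by (subst integral_density) auto
  also have "\<dots> = (\<integral>x. \<bar>1/\<mu>\<bar>^DIM('a) * g (\<mu> *\<^sub>R ((c + (1/\<mu>) *\<^sub>R x) - c)) \<partial>lborel)"
    by (subst integral_distr) auto
  also have "\<dots> = (1/\<mu>)^DIM('a) * (\<integral>p. g p \<partial>lborel)"
    using mu by simp
  finally show ?thesis .
qed


lemma smooth_cont:
  assumes "smooth_fun u" shows "continuous_on UNIV u"
  using smooth_funD(1)[OF assms] differentiable_imp_continuous_on by blast

lemma F_meas:
  fixes u :: "(real^'n::finite) \<times> (real^'m::finite) \<Rightarrow> real"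
  assumes u: "smooth_fun u"
  shows "(\<lambda>p. grad_sq u p - C * (u p)\<^sup>2 / (norm (snd p))\<^sup>2) \<in> borel_measurable borel"
    "(\<lambda>p. \<bar>u p\<bar> powr e) \<in> borel_measurable borel"
proof -
  have [measurable]: "u \<in> borel_measurable borel"
    using smooth_cont[OF u] by (rule borel_measurable_continuous_onI)
  have [measurable]: "(\<lambda>p. frechet_derivative u (at p) b) \<in> borel_measurable borel" for b
    using smooth_cont[OF smooth_funD(2)[OF u]] by (rule borel_measurable_continuous_onI)
  have [measurable]: "(\<lambda>p. norm (snd p)) \<in> borel_measurable (borel :: ((real^'n) \<times> (real^'m)) measure)"
    by (rule borel_measurable_continuous_onI) (intro continuous_intros)
  have [measurable]: "grad_sq u \<in> borel_measurable borel"
    unfolding grad_sq_def by measurable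
  show "(\<lambda>p. grad_sq u p - C * (u p)\<^sup>2 / (norm (snd p))\<^sup>2) \<in> borel_measurable borel"
    by (rule borel_measurable_diff borel_measurable_times borel_measurable_divide borel_measurable_power; measurable)+
  show "(\<lambda>p. \<bar>u p\<bar> powr e) \<in> borel_measurable borel"
    by measurable
qed

lemma scaled:
  fixes u :: "(real^'n::finite) \<times> (real^'m::finite) \<Rightarrow> real" and c0 :: "(real^'n) \<times> (real^'m)"
  assumes u: "u \<in> C0inf S0" and mu: "\<mu> > 0" and c0: "snd c0 = 0"
    and N3: "CARD('n) + CARD('m) \<ge> 3"
    and sub: "(\<lambda>q. c0 + (1/\<mu>) *\<^sub>R q) ` closure {p. u p \<noteq> 0} \<subseteq> S"
  defines "k \<equiv> \<mu> powr ((real (CARD('n) + CARD('m)) - 2) / 2)"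
  shows "(\<lambda>p. k * u (\<mu> *\<^sub>R (p - c0))) \<in> C0inf S"
    and "(\<integral>p. \<bar>k * u (\<mu> *\<^sub>R (p - c0))\<bar> powr crit_exp (CARD('n) + CARD('m)) \<partial>lborel)
         = (\<integral>p. \<bar>u p\<bar> powr crit_exp (CARD('n) + CARD('m)) \<partial>lborel)"
    and "(\<integral>p. grad_sq (\<lambda>p. k * u (\<mu> *\<^sub>R (p - c0))) p
                - C * (k * u (\<mu> *\<^sub>R (p - c0)))\<^sup>2 / (norm (snd p))\<^sup>2 \<partial>lborel)
         = (\<integral>p. grad_sq u p - C * (u p)\<^sup>2 / (norm (snd p))\<^sup>2 \<partial>lborel)"
proof -
  let ?N = "CARD('n) + CARD('m)"
  let ?v = "\<lambda>p. k * u (\<mu> *\<^sub>R (p - c0))"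
  let ?A = "\<lambda>q. c0 + (1/\<mu>) *\<^sub>R q"
  have us: "smooth_fun u" and uc: "compact (closure {p. u p \<noteq> 0})"
    using u unfolding C0inf_def by auto
  have kpos: "k > 0" unfolding k_def using mu by simp
  have DIM: "DIM((real^'n) \<times> (real^'m)) = ?N" by simp
  have Nr: "real ?N > 2" using N3 by linarith
  define a where "a = (real ?N - 2) / 2"
  have kk: "k * k = \<mu> powr (real ?N - 2)"
    unfolding k_def a_def[symmetric] by (simp add: powr_add[symmetric] a_def)
  have k2: "k\<^sup>2 * \<mu>\<^sup>2 * (1/\<mu>)^?N = 1"
  proof -
    have "k\<^sup>2 * \<mu>\<^sup>2 = \<mu> powr (real ?N - 2) * \<mu> powr 2"
      using mu kk by (simp add: power2_eq_square powr_realpow)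
    also have "\<dots> = \<mu> powr (real ?N)" by (simp add: powr_add[symmetric])
    also have "\<dots> = \<mu> ^ ?N" by (rule powr_realpow[OF mu])
    finally show ?thesis using mu by (simp add: power_one_over)
  qed
  have kq: "k powr crit_exp ?N * (1/\<mu>)^?N = 1"
  proof -
    have "k powr crit_exp ?N = \<mu> powr (a * crit_exp ?N)"
      unfolding k_def a_def[symmetric] by (simp add: powr_powr)
    also have "a * crit_exp ?N = real ?N" unfolding a_def crit_exp_def using Nr by (simp add: field_simps)
    also have "\<mu> powr (real ?N) = \<mu> ^ ?N" by (rule powr_realpow[OF mu])
    finally show ?thesis using mu by (simp add: power_one_over)
  qed
  have vs: "smooth_fun ?v" by (rule smooth_affine[OF us])
  have supp: "{p. ?v p \<noteq> 0} = ?A ` {p. u p \<noteq> 0}"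
  proof (intro set_eqI iffI)
    fix p assume "p \<in> {p. ?v p \<noteq> 0}"
    then show "p \<in> ?A ` {p. u p \<noteq> 0}"
      using mu by (intro image_eqI[of _ _ "\<mu> *\<^sub>R (p - c0)"]) auto
  next
    fix p assume "p \<in> ?A ` {p. u p \<noteq> 0}"
    then obtain q where "p = ?A q" "u q \<noteq> 0" by auto
    then show "p \<in> {p. ?v p \<noteq> 0}" using mu kpos by simp
  qed
  have cl: "closure (?A ` X) = ?A ` closure X" for X
  proof -
    have "closure ((\<lambda>q. (1/\<mu>) *\<^sub>R q) ` X) = (\<lambda>q. (1/\<mu>) *\<^sub>R q) ` closure X"
      using mu by (intro closure_injective_linear_image[symmetric]) (auto simp: inj_on_def linear_scaleR)
    then have "closure ((+) c0 ` (\<lambda>q. (1/\<mu>) *\<^sub>R q) ` X) = (+) c0 ` (\<lambda>q. (1/\<mu>) *\<^sub>R q) ` closure X"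
      by (simp add: closure_translation)
    then show ?thesis by (simp add: image_image)
  qed
  have "compact (?A ` closure {p. u p \<noteq> 0})"
    using compact_translation[OF compact_scaling[OF uc, of "1/\<mu>"], of c0] by (simp add: image_image)
  then show "?v \<in> C0inf S"
    unfolding C0inf_def mem_Collect_eq supp cl using vs sub by blast
  have "(\<integral>p. \<bar>?v p\<bar> powr crit_exp ?N \<partial>lborel)
      = (\<integral>p. k powr crit_exp ?N * (\<lambda>q. \<bar>u q\<bar> powr crit_exp ?N) (\<mu> *\<^sub>R (p - c0)) \<partial>lborel)"
    using kpos by (simp add: abs_mult powr_mult)
  also have "\<dots> = k powr crit_exp ?N * ((1/\<mu>)^?N * (\<integral>p. \<bar>u p\<bar> powr crit_exp ?N \<partial>lborel))"
    by (subst integral_mult_right_zero) (simp add: scale_integral[OF F_meas(2)[OF us] mu, unfolded DIM])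
  also have "\<dots> = (\<integral>p. \<bar>u p\<bar> powr crit_exp ?N \<partial>lborel)"
    using kq by (simp add: mult.assoc[symmetric])
  finally show "(\<integral>p. \<bar>?v p\<bar> powr crit_exp ?N \<partial>lborel) = (\<integral>p. \<bar>u p\<bar> powr crit_exp ?N \<partial>lborel)" .
  have du: "u differentiable_on UNIV" using smooth_funD(1)[OF us] .
  have gs: "grad_sq ?v p = (k * \<mu>)\<^sup>2 * grad_sq u (\<mu> *\<^sub>R (p - c0))" for p
    unfolding grad_sq_def affine_frechet[OF du] by (simp add: sum_distrib_left power_mult_distrib)
  have pt: "grad_sq ?v p - C * (?v p)\<^sup>2 / (norm (snd p))\<^sup>2
      = (k * \<mu>)\<^sup>2 * (\<lambda>q. grad_sq u q - C * (u q)\<^sup>2 / (norm (snd q))\<^sup>2) (\<mu> *\<^sub>R (p - c0))" for p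
  proof -
    have sn: "norm (snd (\<mu> *\<^sub>R (p - c0))) = \<mu> * norm (snd p)" using mu c0 by simp
    show ?thesis
    proof (cases "norm (snd p) = 0")
      case True then show ?thesis unfolding gs sn by (simp add: algebra_simps)
    next
      case False then show ?thesis unfolding gs sn using mu
        by (simp add: field_simps power_mult_distrib)
    qed
  qed
  have "(\<integral>p. grad_sq ?v p - C * (?v p)\<^sup>2 / (norm (snd p))\<^sup>2 \<partial>lborel)
     = (\<integral>p. (k * \<mu>)\<^sup>2 * (\<lambda>q. grad_sq u q - C * (u q)\<^sup>2 / (norm (snd q))\<^sup>2) (\<mu> *\<^sub>R (p - c0)) \<partial>lborel)"
    by (simp only: pt)
  also have "\<dots> = (k * \<mu>)\<^sup>2 * ((1/\<mu>)^?N * (\<integral>p. grad_sq u p - C * (u p)\<^sup>2 / (norm (snd p))\<^sup>2 \<partial>lborel))"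
    using scale_integral[OF F_meas(1)[OF us, of C] mu, of c0, unfolded DIM]
    by (simp only: integral_mult_right_zero)
  also have "\<dots> = (\<integral>p. grad_sq u p - C * (u p)\<^sup>2 / (norm (snd p))\<^sup>2 \<partial>lborel)"
    using k2 by (simp add: power_mult_distrib mult.assoc[symmetric])
  finally show "(\<integral>p. grad_sq ?v p - C * (?v p)\<^sup>2 / (norm (snd p))\<^sup>2 \<partial>lborel)
         = (\<integral>p. grad_sq u p - C * (u p)\<^sup>2 / (norm (snd p))\<^sup>2 \<partial>lborel)" .
qed


theorem theorem1p3:
  fixes \<Omega> :: "((real^'n) \<times> (real^'m)) set"
  assumes "CARD('m) \<noteq> 2" and "CARD('n) + CARD('m) \<ge> 3"
    and "open \<Omega>" and "\<Omega> \<subset> punctured_space"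
    and "(\<exists>x0 :: real^'n. \<exists>r>0. ball (x0, 0) r - {p. snd p = 0} \<subseteq> \<Omega>)
         \<or> (\<exists>R>0. {p. norm (snd p) > R} \<subseteq> \<Omega>)"
  shows "kappa \<Omega> = kappa (punctured_space :: ((real^'n) \<times> (real^'m)) set)"
proof -
  let ?N = "CARD('n) + CARD('m)"
  let ?C = "((real CARD('m) - 2) / 2)\<^sup>2"
  define val :: "((real^'n) \<times> (real^'m) \<Rightarrow> real) \<Rightarrow> ereal" where
    "val u = ereal (\<integral>p. grad_sq u p - ?C * (u p)\<^sup>2 / (norm (snd p))\<^sup>2 \<partial>lborel)" for u
  define adm :: "((real^'n) \<times> (real^'m)) set \<Rightarrow> _" where
    "adm S = {u \<in> C0inf S. (\<integral>p. \<bar>u p\<bar> powr crit_exp ?N \<partial>lborel) = 1}" for S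
  have kap: "kappa S = Inf (val ` adm S)" for S :: "((real^'n) \<times> (real^'m)) set"
    unfolding kappa_def Let_def val_def adm_def ..
  let ?P = "punctured_space :: ((real^'n) \<times> (real^'m)) set"
  have sub: "\<Omega> \<subseteq> ?P" using assms(4) by blast
  have "adm \<Omega> \<subseteq> adm ?P"
    unfolding adm_def C0inf_def using sub by blast
  then have ge: "Inf (val ` adm ?P) \<le> Inf (val ` adm \<Omega>)"
    by (intro Inf_superset_mono image_mono)
  have key: "\<exists>v\<in>adm \<Omega>. val v \<le> val u" if u: "u \<in> adm ?P" for u
  proof -
    let ?K = "closure {p. u p \<noteq> 0}"
    have Kc: "compact ?K" and KP: "?K \<subseteq> ?P" using u unfolding adm_def C0inf_def by auto
    have KP': "snd q \<noteq> 0" if "q \<in> ?K" for q using KP that unfolding punctured_space_def by auto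
    have "\<exists>\<mu> c0. \<mu> > 0 \<and> snd c0 = 0 \<and> (\<lambda>q. c0 + (1/\<mu>) *\<^sub>R q) ` ?K \<subseteq> \<Omega>"
      using assms(5)
    proof
      assume "\<exists>x0 :: real^'n. \<exists>r>0. ball (x0, 0) r - {p. snd p = 0} \<subseteq> \<Omega>"
      then obtain x0 :: "real^'n" and r where r: "r > 0" and B: "ball (x0, 0) r - {p. snd p = 0} \<subseteq> \<Omega>"
        by blast
      obtain b where b: "b > 0" "\<forall>q\<in>?K. norm q \<le> b"
        using compact_imp_bounded[OF Kc] bounded_pos by blast
      define \<mu> where "\<mu> = 2 * b / r"
      have mu: "\<mu> > 0" using b r by (simp add: \<mu>_def)
      have "(\<lambda>q. (x0, 0) + (1/\<mu>) *\<^sub>R q) ` ?K \<subseteq> \<Omega>"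
      proof (intro image_subsetI subsetD[OF B] DiffI)
        fix q assume q: "q \<in> ?K"
        have "dist (x0, 0) ((x0, 0) + (1/\<mu>) *\<^sub>R q) = norm q / \<mu>"
          using mu by (simp add: dist_norm)
        also have "\<dots> \<le> b / \<mu>" using b q mu by (simp add: divide_right_mono)
        also have "\<dots> < r" using b r unfolding \<mu>_def by (simp add: field_simps)
        finally show "(x0, 0) + (1/\<mu>) *\<^sub>R q \<in> ball (x0, 0) r" by simp
        show "(x0, 0) + (1/\<mu>) *\<^sub>R q \<notin> {p. snd p = 0}" using KP'[OF q] mu by simp
      qed
      then show ?thesis using mu by (intro exI[of _ \<mu>] exI[of _ "(x0, 0)"]) auto
    next
      assume "\<exists>R>0. {p. norm (snd p) > R} \<subseteq> \<Omega>"
      then obtain R where R: "R > 0" "{p. norm (snd p) > R} \<subseteq> \<Omega>" by blast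
      show ?thesis
      proof (cases "?K = {}")
        case True then show ?thesis by (intro exI[of _ 1] exI[of _ 0]) (simp only: True image_empty, simp)
      next
        case False
        obtain x where x: "x \<in> ?K" "\<forall>q\<in>?K. norm (snd x) \<le> norm (snd q)"
        proof -
          have "continuous_on ?K (\<lambda>q. norm (snd q))" by (intro continuous_intros)
          from continuous_attains_inf[OF Kc False this] that show ?thesis by blast
        qed
        define \<delta> where "\<delta> = norm (snd x)"
        have d: "\<delta> > 0" using KP'[OF x(1)] by (simp add: \<delta>_def)
        define \<mu> where "\<mu> = \<delta> / (2 * R)"
        have mu: "\<mu> > 0" using d R by (simp add: \<mu>_def)
        have "(\<lambda>q. 0 + (1/\<mu>) *\<^sub>R q) ` ?K \<subseteq> \<Omega>"
        proof (intro image_subsetI subsetD[OF R(2)] CollectI)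
          fix q assume q: "q \<in> ?K"
          have "R < \<delta> / \<mu>" using d R by (simp add: \<mu>_def field_simps)
          also have "\<dots> \<le> norm (snd q) / \<mu>" using x(2) q mu unfolding \<delta>_def by (simp add: divide_right_mono)
          also have "\<dots> = norm (snd (0 + (1/\<mu>) *\<^sub>R q))" using mu by simp
          finally show "R < norm (snd (0 + (1/\<mu>) *\<^sub>R q))" .
        qed
        then show ?thesis using mu by (intro exI[of _ \<mu>] exI[of _ 0]) auto
      qed
    qed
    then obtain \<mu> and c0 :: "(real^'n) \<times> (real^'m)" where
      mu: "\<mu> > 0" and c0: "snd c0 = 0" and AK: "(\<lambda>q. c0 + (1/\<mu>) *\<^sub>R q) ` ?K \<subseteq> \<Omega>"
      by blast
    have uC: "u \<in> C0inf ?P" and un: "(\<integral>p. \<bar>u p\<bar> powr crit_exp ?N \<partial>lborel) = 1"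
      using u unfolding adm_def by auto
    note sc = scaled[OF uC mu c0 assms(2) AK]
    show ?thesis
      by (rule bexI[of _ "\<lambda>p. (\<mu> powr ((real ?N - 2) / 2)) * u (\<mu> *\<^sub>R (p - c0))"])
         (use sc un in \<open>auto simp: adm_def val_def\<close>)
  qed
  have le: "Inf (val ` adm \<Omega>) \<le> Inf (val ` adm ?P)"
    by (rule INF_mono) (use key in blast)
  show ?thesis unfolding kap using ge le by (rule antisym[rotated])
qed

end
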